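(* Let $U\subset\mathbb{C}$ be a simply connected domain. Let $\phi=(\phi_1,\phi_2,\phi_3):U\to\mathbb{C}^3$ be holomorphic with $\phi_2=\pm\mathrm{i}\phi_1$ (a fixed sign) and $\phi_1$ nowhere zero. Let $\mathbf{x}(z)=\mathrm{Re}\int_{z_0}^z\phi(w)\,\mathrm{d}w$, with $z=u+\mathrm{i}v$. Then $\mathbf{x}$ is an admissible simply isotropic minimal immersion, and: $$\mathrm{I}=|\phi_1|^2(\mathrm{d}u^2+\mathrm{d}v^2),$$ $$\mathrm{II}=\mathrm{Re}\Big[\phi_1\Big(\tfrac{\phi_3}{\phi_1}\Big)'\Big](\mathrm{d}u^2-\mathrm{d}v^2)-2\,\mathrm{Im}\Big[\phi_1\Big(\tfrac{\phi_3}{\phi_1}\Big)'\Big]\mathrm{d}u\,\mathrm{d}v,$$ $$K=-\Big|\frac{1}{\phi_1}\Big(\frac{\phi_3}{\phi_1}\Big)'\Big|^2.$$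
   Context: $\mathbb{I}^3$ is $\mathbb{R}^3$ with the degenerate metric $\langle a,b\rangle=a^1b^1+a^2b^2$. A surface is admissible if none of its tangent planes contains the vertical direction $(0,0,1)$. The first fundamental form has coefficients $g_{ij}=\langle\mathbf{x}_i,\mathbf{x}_j\rangle$, where $\mathbf{x}_1=\mathbf{x}_u$ and $\mathbf{x}_2=\mathbf{x}_v$. The minimal normal $\mathbf{N}_m$ is the unique vector of the form $(a,b,1)$ that is Euclidean-orthogonal to $\mathbf{x}_u$ and $\mathbf{x}_v$. The second fundamental form is $\mathrm{II}=h_{11}\mathrm{d}u^2+2h_{12}\mathrm{d}u\mathrm{d}v+h_{22}\mathrm{d}v^2$ with $h_{ij}=\mathbf{x}_{ij}\cdot\mathbf{N}_m$, where $\cdot$ is the Euclidean dot product. The isotropic Gaussian curvature is $K=(h_{11}h_{22}-h_{12}^2)/(g_{11}g_{22}-g_{12}^2)$. Minimal means the isotropic mean curvature $H=(g_{11}h_{22}-2g_{12}h_{12}+g_{22}h_{11})/(2\det g)$ vanishes. *)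

theory Defs
  imports "HOL-Complex_Analysis.Complex_Analysis"
begin

text \<open>Surfaces are maps from the parameter domain (a subset of the complex plane,
  z = u + i v) to real^3.  Partial derivatives with respect to u and v.\<close>

definition pu :: "(complex \<Rightarrow> real^3) \<Rightarrow> complex \<Rightarrow> real^3" where
  "pu f z = vector_derivative (\<lambda>t::real. f (z + of_real t)) (at 0)"

definition pv :: "(complex \<Rightarrow> real^3) \<Rightarrow> complex \<Rightarrow> real^3" where
  "pv f z = vector_derivative (\<lambda>t::real. f (z + \<i> * of_real t)) (at 0)"

definition iso_inner :: "real^3 \<Rightarrow> real^3 \<Rightarrow> real" where
  "iso_inner a b = a$1 * b$1 + a$2 * b$2"

definition g11 where "g11 x z = iso_inner (pu x z) (pu x z)"
definition g12 where "g12 x z = iso_inner (pu x z) (pv x z)"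
definition g22 where "g22 x z = iso_inner (pv x z) (pv x z)"

definition minimal_normal :: "(complex \<Rightarrow> real^3) \<Rightarrow> complex \<Rightarrow> real^3" where
  "minimal_normal x z = (THE N. N$3 = 1 \<and> N \<bullet> pu x z = 0 \<and> N \<bullet> pv x z = 0)"

definition h11 where "h11 x z = pu (pu x) z \<bullet> minimal_normal x z"
definition h12 where "h12 x z = pv (pu x) z \<bullet> minimal_normal x z"
definition h22 where "h22 x z = pv (pv x) z \<bullet> minimal_normal x z"

definition iso_K :: "(complex \<Rightarrow> real^3) \<Rightarrow> complex \<Rightarrow> real" where
  "iso_K x z = (h11 x z * h22 x z - (h12 x z)^2) / (g11 x z * g22 x z - (g12 x z)^2)"

definition iso_H :: "(complex \<Rightarrow> real^3) \<Rightarrow> complex \<Rightarrow> real" where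
  "iso_H x z = (g11 x z * h22 x z - 2 * g12 x z * h12 x z + g22 x z * h11 x z)
               / (2 * (g11 x z * g22 x z - (g12 x z)^2))"

definition immersion_on :: "complex set \<Rightarrow> (complex \<Rightarrow> real^3) \<Rightarrow> bool" where
  "immersion_on U x \<longleftrightarrow> (\<forall>z\<in>U. x differentiable (at z) \<and> inj (frechet_derivative x (at z)))"

definition admissible_on :: "complex set \<Rightarrow> (complex \<Rightarrow> real^3) \<Rightarrow> bool" where
  "admissible_on U x \<longleftrightarrow> (\<forall>z\<in>U. vector [0,0,1] \<notin> range (frechet_derivative x (at z)))"

definition iso_minimal_on :: "complex set \<Rightarrow> (complex \<Rightarrow> real^3) \<Rightarrow> bool" where
  "iso_minimal_on U x \<longleftrightarrow> (\<forall>z\<in>U. iso_H x z = 0)"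

text \<open>Integral from z0 to z along a (any) valid path inside U.\<close>
definition path_int :: "complex set \<Rightarrow> complex \<Rightarrow> (complex \<Rightarrow> complex) \<Rightarrow> complex \<Rightarrow> complex" where
  "path_int U z0 f z = contour_integral
      (SOME g. valid_path g \<and> path_image g \<subseteq> U \<and> pathstart g = z0 \<and> pathfinish g = z) f"

definition weierstrass_x ::
  "complex set \<Rightarrow> complex \<Rightarrow> (complex \<Rightarrow> complex) \<Rightarrow> (complex \<Rightarrow> complex) \<Rightarrow> (complex \<Rightarrow> complex)
    \<Rightarrow> complex \<Rightarrow> real^3" where
  "weierstrass_x U z0 \<phi>1 \<phi>2 \<phi>3 z =
     vector [Re (path_int U z0 \<phi>1 z), Re (path_int U z0 \<phi>2 z), Re (path_int U z0 \<phi>3 z)]"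

end

theory Submission
  imports Defs
begin

lemma lin2:
  fixes x y p1 p2 :: real
  assumes "x*p1 - y*p2 = 0" "x*p2 + y*p1 = 0" "p1^2+p2^2 \<noteq> 0"
  shows "x = 0 \<and> y = 0"
proof -
  have "x*(p1^2+p2^2) = p1*(x*p1 - y*p2) + p2*(x*p2 + y*p1)" by algebra
  also have "\<dots> = 0" using assms by simp
  finally have x: "x = 0" using assms(3) by auto
  have "y*(p1^2+p2^2) = p1*(x*p2 + y*p1) - p2*(x*p1 - y*p2)" by algebra
  also have "\<dots> = 0" using assms by simp
  finally have "y = 0" using assms(3) by auto
  with x show ?thesis by simp
qed

lemma normal_alg:
  fixes p c s :: complex
  assumes s: "s = 1 \<or> s = -1" and p: "p \<noteq> 0"
  shows "(THE N. N$3 = 1 \<and> N \<bullet> vector [Re p, Re (s*\<i>*p), Re (-(p*c))] = 0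
            \<and> N \<bullet> vector [Re (p*\<i>), Re (s*\<i>*p*\<i>), Re (-(p*c)*\<i>)] = 0)
         = (vector [Re c, Re s * Im c, 1] :: real^3)"
proof (rule the_equality)
  have pp: "(Re p)^2 + (Im p)^2 \<noteq> 0" using p by (metis complex_eq_0)
  show "(vector [Re c, Re s * Im c, 1] :: real^3)$3 = 1 \<and>
    (vector [Re c, Re s * Im c, 1] :: real^3) \<bullet> vector [Re p, Re (s*\<i>*p), Re (-(p*c))] = 0 \<and>
    (vector [Re c, Re s * Im c, 1] :: real^3) \<bullet> vector [Re (p*\<i>), Re (s*\<i>*p*\<i>), Re (-(p*c)*\<i>)] = 0"
    using s by (auto simp: inner_vec_def sum_3 algebra_simps)
  fix N :: "real^3"
  assume N: "N$3 = 1 \<and> N \<bullet> vector [Re p, Re (s*\<i>*p), Re (-(p*c))] = 0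
            \<and> N \<bullet> vector [Re (p*\<i>), Re (s*\<i>*p*\<i>), Re (-(p*c)*\<i>)] = 0"
  have e: "(N$1 - Re c)*Re p - (Re s * N$2 - Im c)*Im p = 0 \<and> (N$1 - Re c)*Im p + (Re s * N$2 - Im c)*Re p = 0"
    using s N by (auto simp: inner_vec_def sum_3 algebra_simps)
  have "N$1 - Re c = 0 \<and> Re s * N$2 - Im c = 0" using lin2[OF _ _ pp] e by blast
  then have "N$1 = Re c" "N$2 = Re s * Im c" using s by auto
  then show "N = vector [Re c, Re s * Im c, 1]" using N by (simp add: vec_eq_iff forall_3)
qed

lemma pu_deriv:
  assumes "(f has_derivative D) (at z)"
  shows "pu f z = D 1"
proof -
  have g: "((\<lambda>t::real. z + of_real t) has_derivative (\<lambda>t. of_real t)) (at 0)"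
    by (auto intro!: derivative_eq_intros)
  have f0: "(f has_derivative D) (at ((\<lambda>t::real. z + of_real t) 0))" using assms by simp
  have "((\<lambda>t. f (z + of_real t)) has_derivative (\<lambda>t. D (of_real t))) (at 0)"
    by (rule has_derivative_compose[OF g f0])
  moreover have "(\<lambda>t. D (of_real t)) = (\<lambda>t. t *\<^sub>R D 1)"
  proof
    fix t :: real
    have "linear D" using assms has_derivative_linear by blast
    then have "D (t *\<^sub>R 1) = t *\<^sub>R D 1" by (simp add: linear_scale)
    then show "D (of_real t) = t *\<^sub>R D 1" by (simp add: scaleR_conv_of_real)
  qed
  ultimately have "((\<lambda>t. f (z + of_real t)) has_vector_derivative D 1) (at 0)"
    by (simp add: has_vector_derivative_def o_def)
  then show ?thesis unfolding pu_def by (rule vector_derivative_at)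
qed

lemma pv_deriv:
  assumes "(f has_derivative D) (at z)"
  shows "pv f z = D \<i>"
proof -
  have g: "((\<lambda>t::real. z + \<i> * of_real t) has_derivative (\<lambda>t. \<i> * of_real t)) (at 0)"
    by (auto intro!: derivative_eq_intros)
  have f0: "(f has_derivative D) (at ((\<lambda>t::real. z + \<i> * of_real t) 0))" using assms by simp
  have "((\<lambda>t. f (z + \<i> * of_real t)) has_derivative (\<lambda>t. D (\<i> * of_real t))) (at 0)"
    by (rule has_derivative_compose[OF g f0])
  moreover have "(\<lambda>t. D (\<i> * of_real t)) = (\<lambda>t. t *\<^sub>R D \<i>)"
  proof
    fix t :: real
    have "linear D" using assms has_derivative_linear by blast
    then have "D (t *\<^sub>R \<i>) = t *\<^sub>R D \<i>" by (simp add: linear_scale)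
    then show "D (\<i> * of_real t) = t *\<^sub>R D \<i>" by (simp add: scaleR_conv_of_real mult.commute)
  qed
  ultimately have "((\<lambda>t. f (z + \<i> * of_real t)) has_vector_derivative D \<i>) (at 0)"
    by (simp add: has_vector_derivative_def o_def)
  then show ?thesis unfolding pv_def by (rule vector_derivative_at)
qed

lemma vec3_split: "(vector [a,b,c] :: real^3) = a *\<^sub>R vector[1,0,0] + b *\<^sub>R vector[0,1,0] + c *\<^sub>R vector[0,0,1]"
  by (simp add: vec_eq_iff forall_3)

lemma vec3_deriv:
  assumes "(G1 has_field_derivative g1) (at z)" "(G2 has_field_derivative g2) (at z)"
    "(G3 has_field_derivative g3) (at z)"
  shows "((\<lambda>w. vector [Re (G1 w), Re (G2 w), Re (G3 w)] :: real^3) has_derivative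
          (\<lambda>h. vector [Re (g1*h), Re (g2*h), Re (g3*h)])) (at z)"
proof -
  have "((\<lambda>w. Re (G1 w) *\<^sub>R vector[1,0,0] + Re (G2 w) *\<^sub>R vector[0,1,0] + Re (G3 w) *\<^sub>R (vector[0,0,1]::real^3)) has_derivative
          (\<lambda>h. Re (g1*h) *\<^sub>R vector[1,0,0] + Re (g2*h) *\<^sub>R vector[0,1,0] + Re (g3*h) *\<^sub>R vector[0,0,1])) (at z)"
    by (intro has_derivative_add has_derivative_scaleR_left has_derivative_Re
        has_field_derivative_imp_has_derivative assms)
  then show ?thesis by (simp only: vec3_split[symmetric])
qed

lemma zero_from_Re:
  fixes p h s :: complex
  assumes "s = 1 \<or> s = -1" "Re (p*h) = 0" "Re (s*\<i>*p*h) = 0"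
  shows "p*h = 0"
proof -
  have "Im (p*h) = 0" using assms by (auto simp: algebra_simps)
  then show ?thesis using assms(2) by (simp add: complex_eq_iff)
qed

lemma Dinj:
  fixes p q s :: complex
  assumes "s = 1 \<or> s = -1" "p \<noteq> 0"
  shows "inj (\<lambda>h. vector [Re (p*h), Re (s*\<i>*p*h), Re (q*h)] :: real^3)"
proof (rule injI)
  fix h1 h2
  assume e: "(vector [Re (p*h1), Re (s*\<i>*p*h1), Re (q*h1)] :: real^3) = vector [Re (p*h2), Re (s*\<i>*p*h2), Re (q*h2)]"
  have e1: "Re (p*h1) = Re (p*h2)" using arg_cong[OF e, of "\<lambda>v::real^3. v$1"] by simp
  have e2: "Re (s*\<i>*p*h1) = Re (s*\<i>*p*h2)" using arg_cong[OF e, of "\<lambda>v::real^3. v$2"] by simp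
  have "p*(h1-h2) = 0"
    by (rule zero_from_Re[OF assms(1)]) (use e1 e2 in \<open>auto simp: algebra_simps\<close>)
  then show "h1 = h2" using assms(2) by simp
qed

lemma Dadm:
  fixes p q s :: complex
  assumes "s = 1 \<or> s = -1" "p \<noteq> 0"
  shows "vector [0,0,1] \<notin> range (\<lambda>h. vector [Re (p*h), Re (s*\<i>*p*h), Re (q*h)] :: real^3)"
proof
  assume "vector [0,0,1] \<in> range (\<lambda>h. vector [Re (p*h), Re (s*\<i>*p*h), Re (q*h)] :: real^3)"
  then obtain h where e: "(vector [0,0,1] :: real^3) = vector [Re (p*h), Re (s*\<i>*p*h), Re (q*h)]" by auto
  have e1: "Re (p*h) = 0" using arg_cong[OF e, of "\<lambda>v::real^3. v$1"] by simp
  have e2: "Re (s*\<i>*p*h) = 0" using arg_cong[OF e, of "\<lambda>v::real^3. v$2"] by simp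
  have e3: "Re (q*h) = 1" using arg_cong[OF e, of "\<lambda>v::real^3. v$3"] by simp
  have "p*h = 0" by (rule zero_from_Re[OF assms(1) e1 e2])
  then have "h = 0" using assms(2) by simp
  with e3 show False by simp
qed

theorem mainTheorem5:
  fixes U :: "complex set" and z0 :: complex and s :: complex
    and \<phi>1 \<phi>2 \<phi>3 :: "complex \<Rightarrow> complex"
  assumes "open U" and "connected U" and "simply_connected U" and "z0 \<in> U"
    and "\<phi>1 holomorphic_on U" and "\<phi>2 holomorphic_on U" and "\<phi>3 holomorphic_on U"
    and "s = 1 \<or> s = -1"
    and "\<forall>z\<in>U. \<phi>2 z = s * \<i> * \<phi>1 z"
    and "\<forall>z\<in>U. \<phi>1 z \<noteq> 0"
  defines "x \<equiv> weierstrass_x U z0 \<phi>1 \<phi>2 \<phi>3"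
  shows "immersion_on U x \<and> admissible_on U x \<and> iso_minimal_on U x \<and>
    (\<forall>z\<in>U.
       g11 x z = (cmod (\<phi>1 z))^2 \<and> g12 x z = 0 \<and> g22 x z = (cmod (\<phi>1 z))^2 \<and>
       h11 x z = Re (\<phi>1 z * deriv (\<lambda>w. \<phi>3 w / \<phi>1 w) z) \<and>
       h22 x z = - Re (\<phi>1 z * deriv (\<lambda>w. \<phi>3 w / \<phi>1 w) z) \<and>
       h12 x z = - Im (\<phi>1 z * deriv (\<lambda>w. \<phi>3 w / \<phi>1 w) z) \<and>
       iso_K x z = - ((cmod ((1 / \<phi>1 z) * deriv (\<lambda>w. \<phi>3 w / \<phi>1 w) z))^2))"
proof -
  note U = \<open>open U\<close> and sS = \<open>s = 1 \<or> s = -1\<close>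
  have prim: "\<exists>F. \<forall>z\<in>U. (F has_field_derivative f z) (at z)" if "f holomorphic_on U" for f
    using that simply_connected_eq_global_primitive[THEN iffD1, OF \<open>open U\<close> \<open>simply_connected U\<close>] by blast
  obtain F1 where F1: "\<forall>z\<in>U. (F1 has_field_derivative \<phi>1 z) (at z)" using prim assms(5) by blast
  obtain F2 where F2: "\<forall>z\<in>U. (F2 has_field_derivative \<phi>2 z) (at z)" using prim assms(6) by blast
  obtain F3 where F3: "\<forall>z\<in>U. (F3 has_field_derivative \<phi>3 z) (at z)" using prim assms(7) by blast
  have pint: "path_int U z0 f w = F w - F z0"
    if F: "\<forall>z\<in>U. (F has_field_derivative f z) (at z)" and w: "w \<in> U" for F f w
  proof -
    obtain g where "polynomial_function g" "path_image g \<subseteq> U" "pathstart g = z0" "pathfinish g = w"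
      using connected_open_polynomial_connected[OF U \<open>connected U\<close> \<open>z0 \<in> U\<close> w] by blast
    then have ex: "\<exists>g. valid_path g \<and> path_image g \<subseteq> U \<and> pathstart g = z0 \<and> pathfinish g = w"
      using valid_path_polynomial_function by blast
    define g' where "g' = (SOME g. valid_path g \<and> path_image g \<subseteq> U \<and> pathstart g = z0 \<and> pathfinish g = w)"
    have g': "valid_path g' \<and> path_image g' \<subseteq> U \<and> pathstart g' = z0 \<and> pathfinish g' = w"
      unfolding g'_def by (rule someI_ex[OF ex])
    have "(f has_contour_integral (F (pathfinish g') - F (pathstart g'))) g'"
      by (rule contour_integral_primitive[of U]) (use F g' in \<open>auto intro: has_field_derivative_at_within\<close>)
    then show ?thesis unfolding path_int_def g'_def[symmetric] using g' contour_integral_unique by auto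
  qed
  define y where "y w = (vector [Re (F1 w - F1 z0), Re (F2 w - F2 z0), Re (F3 w - F3 z0)] :: real^3)" for w
  have xy: "\<And>w. w \<in> U \<Longrightarrow> y w = x w"
    by (simp add: x_def weierstrass_x_def y_def pint[OF F1] pint[OF F2] pint[OF F3])
  have dphi1: "\<And>z. z \<in> U \<Longrightarrow> (\<phi>1 has_field_derivative deriv \<phi>1 z) (at z)"
    using holomorphic_derivI[OF assms(5) U] by blast
  have dphi2: "\<And>z. z \<in> U \<Longrightarrow> (\<phi>2 has_field_derivative deriv \<phi>2 z) (at z)"
    using holomorphic_derivI[OF assms(6) U] by blast
  have dphi3: "\<And>z. z \<in> U \<Longrightarrow> (\<phi>3 has_field_derivative deriv \<phi>3 z) (at z)"
    using holomorphic_derivI[OF assms(7) U] by blast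
  have d2: "deriv \<phi>2 z = s * \<i> * deriv \<phi>1 z" if z: "z \<in> U" for z
  proof -
    have "((\<lambda>w. s * \<i> * \<phi>1 w) has_field_derivative s * \<i> * deriv \<phi>1 z) (at z)"
      using dphi1[OF z] by (auto intro!: derivative_eq_intros)
    then have "(\<phi>2 has_field_derivative s * \<i> * deriv \<phi>1 z) (at z)"
      by (rule has_field_derivative_transform_within_open[OF _ U z]) (use assms(9) in auto)
    then show ?thesis by (rule DERIV_imp_deriv)
  qed
  have Dx: "(x has_derivative (\<lambda>h. vector [Re (\<phi>1 z*h), Re (\<phi>2 z*h), Re (\<phi>3 z*h)])) (at z)"
    if z: "z \<in> U" for z
  proof -
    have "(y has_derivative (\<lambda>h. vector [Re (\<phi>1 z*h), Re (\<phi>2 z*h), Re (\<phi>3 z*h)])) (at z)"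
      unfolding y_def
      by (rule vec3_deriv) (use F1 F2 F3 z in \<open>auto intro!: derivative_eq_intros\<close>)
    then show ?thesis by (rule has_derivative_transform_within_open[OF _ U z]) (use xy in auto)
  qed
  have pux: "pu x z = vector [Re (\<phi>1 z), Re (\<phi>2 z), Re (\<phi>3 z)]" if "z \<in> U" for z
    using pu_deriv[OF Dx[OF that]] by simp
  have pvx: "pv x z = vector [Re (\<phi>1 z*\<i>), Re (\<phi>2 z*\<i>), Re (\<phi>3 z*\<i>)]" if "z \<in> U" for z
    using pv_deriv[OF Dx[OF that]] by simp
  have Dpu: "(pu x has_derivative (\<lambda>h. vector [Re (deriv \<phi>1 z*h), Re (deriv \<phi>2 z*h), Re (deriv \<phi>3 z*h)])) (at z)"
    if z: "z \<in> U" for z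
  proof -
    have "((\<lambda>w. vector [Re (\<phi>1 w), Re (\<phi>2 w), Re (\<phi>3 w)] :: real^3) has_derivative (\<lambda>h. vector [Re (deriv \<phi>1 z*h), Re (deriv \<phi>2 z*h), Re (deriv \<phi>3 z*h)])) (at z)"
      by (rule vec3_deriv) (use dphi1 dphi2 dphi3 z in auto)
    then show ?thesis by (rule has_derivative_transform_within_open[OF _ U z]) (use pux in auto)
  qed
  have Dpv: "(pv x has_derivative (\<lambda>h. vector [Re (deriv \<phi>1 z*\<i>*h), Re (deriv \<phi>2 z*\<i>*h), Re (deriv \<phi>3 z*\<i>*h)])) (at z)"
    if z: "z \<in> U" for z
  proof -
    have "((\<lambda>w. vector [Re (\<phi>1 w*\<i>), Re (\<phi>2 w*\<i>), Re (\<phi>3 w*\<i>)] :: real^3) has_derivative (\<lambda>h. vector [Re (deriv \<phi>1 z*\<i>*h), Re (deriv \<phi>2 z*\<i>*h), Re (deriv \<phi>3 z*\<i>*h)])) (at z)"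
      by (rule vec3_deriv) (use dphi1 dphi2 dphi3 z in \<open>auto intro!: derivative_eq_intros\<close>)
    then show ?thesis by (rule has_derivative_transform_within_open[OF _ U z]) (use pvx in auto)
  qed
  have main: "g11 x z = (cmod (\<phi>1 z))^2 \<and> g12 x z = 0 \<and> g22 x z = (cmod (\<phi>1 z))^2 \<and>
       h11 x z = Re (\<phi>1 z * deriv (\<lambda>w. \<phi>3 w / \<phi>1 w) z) \<and>
       h22 x z = - Re (\<phi>1 z * deriv (\<lambda>w. \<phi>3 w / \<phi>1 w) z) \<and>
       h12 x z = - Im (\<phi>1 z * deriv (\<lambda>w. \<phi>3 w / \<phi>1 w) z) \<and>
       iso_K x z = - ((cmod ((1 / \<phi>1 z) * deriv (\<lambda>w. \<phi>3 w / \<phi>1 w) z))^2) \<and>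
       iso_H x z = 0" if z: "z \<in> U" for z
  proof -
    define p where "p = \<phi>1 z"
    define c where "c = - \<phi>3 z / p"
    define p' where "p' = deriv \<phi>1 z"
    define q' where "q' = deriv \<phi>3 z"
    define w where "w = q' + p' * c"
    have p0: "p \<noteq> 0" using assms(10) z p_def by auto
    have q: "\<phi>3 z = - (p * c)" using p0 by (simp add: c_def)
    have ph2: "\<phi>2 z = s * \<i> * p" using assms(9) z p_def by auto
    have dq: "deriv (\<lambda>w. \<phi>3 w / \<phi>1 w) z = (q' * p - \<phi>3 z * p') / (p * p)"
      unfolding p_def p'_def q'_def
      by (rule DERIV_imp_deriv, rule DERIV_divide[OF dphi3[OF z] dphi1[OF z]]) (use p0 p_def in auto)
    have pw: "p * deriv (\<lambda>w. \<phi>3 w / \<phi>1 w) z = w"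
      unfolding dq w_def q using p0 by (simp add: field_simps)
    have iw: "(1 / p) * deriv (\<lambda>w. \<phi>3 w / \<phi>1 w) z = w / (p * p)"
      using pw p0 by (simp add: field_simps)
    have N: "minimal_normal x z = vector [Re c, Re s * Im c, 1]"
      unfolding minimal_normal_def pux[OF z] pvx[OF z] ph2 q p_def[symmetric]
      by (rule normal_alg[OF sS p0])
    have puu: "pu (pu x) z = vector [Re p', Re (s*\<i>*p'), Re q']"
      using pu_deriv[OF Dpu[OF z]] d2[OF z] by (simp add: p'_def q'_def)
    have pvu: "pv (pu x) z = vector [Re (p'*\<i>), Re (s*\<i>*p'*\<i>), Re (q'*\<i>)]"
      using pv_deriv[OF Dpu[OF z]] d2[OF z] by (simp add: p'_def q'_def)
    have pvv: "pv (pv x) z = vector [Re (p'*\<i>*\<i>), Re (s*\<i>*p'*\<i>*\<i>), Re (q'*\<i>*\<i>)]"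
      using pv_deriv[OF Dpv[OF z]] d2[OF z] by (simp add: p'_def q'_def)
    have cm: "(cmod p)^2 = Re p * Re p + Im p * Im p" unfolding cmod_power2 by (simp add: power2_eq_square)
    have G11: "g11 x z = (cmod p)^2"
      using sS by (auto simp: g11_def iso_inner_def pux[OF z] ph2 cm p_def[symmetric])
    have G22: "g22 x z = (cmod p)^2"
      using sS by (auto simp: g22_def iso_inner_def pvx[OF z] ph2 cm p_def[symmetric])
    have G12: "g12 x z = 0"
      using sS by (auto simp: g12_def iso_inner_def pux[OF z] pvx[OF z] ph2 p_def[symmetric] algebra_simps)
    have H11: "h11 x z = Re w"
      using sS by (auto simp: h11_def N puu inner_vec_def sum_3 w_def algebra_simps)
    have H22: "h22 x z = - Re w"
      using sS by (auto simp: h22_def N pvv inner_vec_def sum_3 w_def algebra_simps)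
    have H12: "h12 x z = - Im w"
      using sS by (auto simp: h12_def N pvu inner_vec_def sum_3 w_def algebra_simps)
    have cw: "cmod w * cmod w = Re w * Re w + Im w * Im w" using cmod_power2[of w] by (simp add: power2_eq_square)
    have cp: "cmod p \<noteq> 0" using p0 by simp
    have K: "iso_K x z = - ((cmod (w / (p*p)))^2)"
    proof -
      have "iso_K x z = (- ((Re w)^2 + (Im w)^2)) / ((cmod p)^2 * (cmod p)^2)"
        unfolding iso_K_def G11 G22 G12 H11 H22 H12 by (simp add: power2_eq_square)
      also have "\<dots> = - ((cmod (w / (p*p)))^2)"
        using cp cw by (simp add: norm_divide norm_mult power_divide power2_eq_square minus_divide_left[symmetric] diff_divide_distrib add_divide_distrib)
      finally show ?thesis .
    qed
    have H: "iso_H x z = 0"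
      unfolding iso_H_def G11 G22 G12 H11 H22 by simp
    show ?thesis
      using G11 G22 G12 H11 H22 H12 K H pw iw by (simp add: p_def)
  qed
  have imm: "immersion_on U x"
    unfolding immersion_on_def
  proof
    fix z assume z: "z \<in> U"
    have "frechet_derivative x (at z) = (\<lambda>h. vector [Re (\<phi>1 z*h), Re (\<phi>2 z*h), Re (\<phi>3 z*h)])"
      using frechet_derivative_at[OF Dx[OF z]] by simp
    moreover have "inj (\<lambda>h. vector [Re (\<phi>1 z*h), Re (\<phi>2 z*h), Re (\<phi>3 z*h)] :: real^3)"
      using Dinj[OF sS, of "\<phi>1 z" "\<phi>3 z"] assms(9,10) z by auto
    ultimately show "x differentiable at z \<and> inj (frechet_derivative x (at z))"
      using Dx[OF z] differentiable_def by auto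
  qed
  have adm: "admissible_on U x"
    unfolding admissible_on_def
  proof
    fix z assume z: "z \<in> U"
    have "frechet_derivative x (at z) = (\<lambda>h. vector [Re (\<phi>1 z*h), Re (\<phi>2 z*h), Re (\<phi>3 z*h)])"
      using frechet_derivative_at[OF Dx[OF z]] by simp
    then show "vector [0,0,1] \<notin> range (frechet_derivative x (at z))"
      using Dadm[OF sS, of "\<phi>1 z" "\<phi>3 z"] assms(9,10) z by auto
  qed
  show ?thesis using imm adm main unfolding iso_minimal_on_def by auto
qed

end
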